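(* Let $\mathbb{K}$ be a field and $f=a_0(x)+a_1(x)y+\cdots+a_n(x)y^n\in\mathbb{K}[x,y]$ with $n\geq 2$, $a_0,\ldots,a_n\in\mathbb{K}[x]$, $a_0a_n\neq 0$. Assume that $f$ has no nonconstant factor in $\mathbb{K}[x]$. If there exists an index $j$ with $1\leq j\leq n-1$ such that $$\deg a_j>\max_{i<j}\{\deg a_i+(j-i)\deg a_n\}\quad\text{and}\quad \deg a_j>\max_{i>j}\{\deg a_i+(i-j)\deg a_0\},$$ then $f$ is a product of at most $\min\{j,n-j\}$ irreducible polynomials over $\mathbb{K}[x]$. In particular, if $j=1$ or $j=n-1$, then $f$ is irreducible over $\mathbb{K}[x]$.
   Context: Indices $i$ range over $\{0,1,\ldots,n\}$. $f$ is regarded as a polynomial in $y$ with coefficients in $\mathbb{K}[x]$; "a product of at most $k$ irreducible polynomials over $\mathbb{K}[x]$" means that in the factorization of $f$ into irreducible elements of $\mathbb{K}[x][y]$ the number of factors, counted with multiplicities, is at most $k$. *)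

theory Defs
  imports "HOL-Computational_Algebra.Polynomial_Factorial"
begin

end

theory Submission
  imports Defs
begin


definition mu :: "'a::field poly poly \<Rightarrow> nat" where
  "mu f = degree f + degree (lead_coeff f)"

lemma mu_mult: "f \<noteq> 0 \<Longrightarrow> g \<noteq> 0 \<Longrightarrow> mu (f * g) = mu f + mu g"
  proof -
  assume a: "f \<noteq> 0" "g \<noteq> 0"
  have "lead_coeff (f * g) = lead_coeff f * lead_coeff g" by (rule lead_coeff_mult)
  then show ?thesis using a by (simp add: mu_def degree_mult_eq del: lead_coeff_mult)
qed

lemma mu_pos: assumes "(f::'a::field poly poly) \<noteq> 0" "\<not> is_unit f" shows "mu f > 0"
proof (rule ccontr)
  assume "\<not> mu f > 0"
  then have d: "degree f = 0" "degree (lead_coeff f) = 0" by (auto simp: mu_def)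
  then obtain c where "f = [:c:]" by (metis degree_eq_zeroE)
  moreover with d obtain e where "c = [:e:]" by (metis degree_eq_zeroE lead_coeff_pCons(2) pCons_0_0 coeff_pCons_0 degree_0)
  ultimately show False using assms by (auto simp: is_unit_poly_iff dvd_field_iff)
qed

lemma factor_list:
  fixes f :: "'a::field poly poly"
  shows "f \<noteq> 0 \<Longrightarrow> \<not> is_unit f \<Longrightarrow> \<exists>fs. f = prod_list fs \<and> (\<forall>g\<in>set fs. irreducible g)"
proof (induction "mu f" arbitrary: f rule: less_induct)
  case less
  show ?case
  proof (cases "irreducible f")
    case True
    then show ?thesis by (intro exI[of _ "[f]"]) auto
  next
    case False
    then obtain a b where ab: "f = a * b" "\<not> is_unit a" "\<not> is_unit b"
      using less.prems unfolding irreducible_def by blast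
    have nz: "a \<noteq> 0" "b \<noteq> 0" using ab less.prems by auto
    have m: "mu f = mu a + mu b" using ab nz mu_mult by blast
    have "mu a > 0" "mu b > 0" using mu_pos nz ab by auto
    then obtain fa fb where "a = prod_list fa" "\<forall>g\<in>set fa. irreducible g"
      "b = prod_list fb" "\<forall>g\<in>set fb. irreducible g"
      using less.hyps[of a] less.hyps[of b] m nz ab by auto
    then show ?thesis using ab by (intro exI[of _ "fa @ fb"]) auto
  qed
qed


definition wv :: "int \<Rightarrow> 'a::field poly poly \<Rightarrow> nat \<Rightarrow> int" where
  "wv w g k = int (degree (coeff g k)) - w * int k"

definition is_hi :: "int \<Rightarrow> 'a::field poly poly \<Rightarrow> nat \<Rightarrow> int \<Rightarrow> bool" where
  "is_hi w g P M \<longleftrightarrow> coeff g P \<noteq> 0 \<and> wv w g P = M \<and> (\<forall>k. coeff g k \<noteq> 0 \<longrightarrow> wv w g k \<le> M)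
     \<and> (\<forall>k>P. coeff g k \<noteq> 0 \<longrightarrow> wv w g k < M)"

definition is_lo :: "int \<Rightarrow> 'a::field poly poly \<Rightarrow> nat \<Rightarrow> int \<Rightarrow> bool" where
  "is_lo w g P M \<longleftrightarrow> coeff g P \<noteq> 0 \<and> wv w g P = M \<and> (\<forall>k. coeff g k \<noteq> 0 \<longrightarrow> wv w g k \<le> M)
     \<and> (\<forall>k<P. coeff g k \<noteq> 0 \<longrightarrow> wv w g k < M)"

definition lep :: "int \<Rightarrow> 'a::field poly \<Rightarrow> bool" where
  "lep D p \<longleftrightarrow> p = 0 \<or> int (degree p) \<le> D"

definition ltp :: "int \<Rightarrow> 'a::field poly \<Rightarrow> bool" where
  "ltp D p \<longleftrightarrow> p = 0 \<or> int (degree p) < D"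

lemma lep_add: "lep D p \<Longrightarrow> lep D q \<Longrightarrow> lep D (p + q)"
  unfolding lep_def using degree_add_le_max[of p q] by fastforce

lemma ltp_add: "ltp D p \<Longrightarrow> ltp D q \<Longrightarrow> ltp D (p + q)"
  unfolding ltp_def using degree_add_le_max[of p q] by fastforce

lemma lep_sum: "finite A \<Longrightarrow> (\<And>i. i \<in> A \<Longrightarrow> lep D (t i)) \<Longrightarrow> lep D (sum t A)"
  by (induction A rule: finite_induct) (auto simp: lep_add, simp add: lep_def)

lemma ltp_sum: "finite A \<Longrightarrow> (\<And>i. i \<in> A \<Longrightarrow> ltp D (t i)) \<Longrightarrow> ltp D (sum t A)"
  by (induction A rule: finite_induct) (auto simp: ltp_add, simp add: ltp_def)

lemma exact_add: "p \<noteq> 0 \<Longrightarrow> ltp (int (degree p)) q \<Longrightarrow> p + q \<noteq> 0 \<and> degree (p + q) = degree p"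
proof -
  assume p: "p \<noteq> 0" and q: "ltp (int (degree p)) q"
  show ?thesis
  proof (cases "q = 0")
    case True then show ?thesis using p by simp
  next
    case False
    then have "degree q < degree p" using q by (simp add: ltp_def)
    then have d: "degree (p + q) = degree p" by (rule degree_add_eq_left)
    have "p + q \<noteq> 0"
    proof
      assume "p + q = 0"
      then have "q = - p" by (simp add: eq_neg_iff_add_eq_0 add.commute)
      then show False using \<open>degree q < degree p\<close> by simp
    qed
    then show ?thesis using d by simp
  qed
qed

lemma term_deg:
  fixes g h :: "'a::field poly poly"
  assumes "coeff g i \<noteq> 0" "coeff h l \<noteq> 0"
  shows "int (degree (coeff g i * coeff h l)) = wv w g i + wv w h l + w * int (i + l)"
  using assms by (simp add: degree_mult_eq wv_def algebra_simps)

lemma mult_hi: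
  fixes g h :: "'a::field poly poly"
  assumes G: "is_hi w g P Mg" and H: "is_hi w h Q Mh"
  shows "is_hi w (g * h) (P + Q) (Mg + Mh)"
proof -
  let ?t = "\<lambda>k i. coeff g i * coeff h (k - i)"
  let ?D = "\<lambda>k. Mg + Mh + w * int k"
  have le: "lep (?D k) (?t k i)" if "i \<le> k" for k i
  proof (cases "coeff g i = 0 \<or> coeff h (k - i) = 0")
    case True then show ?thesis by (auto simp: lep_def)
  next
    case False
    then have "wv w g i \<le> Mg" "wv w h (k - i) \<le> Mh" using G H by (auto simp: is_hi_def)
    then show ?thesis using term_deg[of g i h "k - i" w] False that by (auto simp: lep_def)
  qed
  have lt: "ltp (?D k) (?t k i)" if "i \<le> k" "P < i \<or> Q < k - i" for k i
  proof (cases "coeff g i = 0 \<or> coeff h (k - i) = 0")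
    case True then show ?thesis by (auto simp: ltp_def)
  next
    case False
    then have "wv w g i \<le> Mg" "wv w h (k - i) \<le> Mh" using G H by (auto simp: is_hi_def)
    moreover have "wv w g i < Mg \<or> wv w h (k - i) < Mh" using G H that False by (auto simp: is_hi_def)
    ultimately show ?thesis using term_deg[of g i h "k - i" w] False that by (auto simp: ltp_def)
  qed
  have all: "coeff (g * h) k \<noteq> 0 \<longrightarrow> wv w (g * h) k \<le> Mg + Mh" for k
  proof -
    have "lep (?D k) (coeff (g * h) k)" unfolding coeff_mult by (rule lep_sum) (use le in auto)
    then show ?thesis by (auto simp: lep_def wv_def)
  qed
  have above: "coeff (g * h) k \<noteq> 0 \<longrightarrow> wv w (g * h) k < Mg + Mh" if "k > P + Q" for k
  proof -
    have "ltp (?D k) (coeff (g * h) k)" unfolding coeff_mult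
    proof (rule ltp_sum)
      fix i assume "i \<in> {..k}"
      then show "ltp (?D k) (?t k i)" by (intro lt) (use that in auto)
    qed simp
    then show ?thesis by (auto simp: ltp_def wv_def)
  qed
  let ?k = "P + Q"
  have split: "coeff (g * h) ?k = ?t ?k P + (\<Sum>i\<in>{..?k} - {P}. ?t ?k i)"
    unfolding coeff_mult by (subst sum.remove[of _ P]) auto
  have tP: "?t ?k P \<noteq> 0" "int (degree (?t ?k P)) = ?D ?k"
    using G H term_deg[of g P h Q w] by (auto simp: is_hi_def)
  have rest: "ltp (int (degree (?t ?k P))) (\<Sum>i\<in>{..?k} - {P}. ?t ?k i)"
    unfolding tP(2)
  proof (rule ltp_sum)
    fix i assume "i \<in> {..?k} - {P}"
    then show "ltp (?D ?k) (?t ?k i)" by (intro lt) auto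
  qed simp
  from exact_add[OF tP(1) rest] split tP(2)
  have "coeff (g * h) ?k \<noteq> 0" "wv w (g * h) ?k = Mg + Mh" by (auto simp: wv_def)
  then show ?thesis using all above by (auto simp: is_hi_def)
qed

lemma mult_lo:
  fixes g h :: "'a::field poly poly"
  assumes G: "is_lo w g P Mg" and H: "is_lo w h Q Mh"
  shows "is_lo w (g * h) (P + Q) (Mg + Mh)"
proof -
  let ?t = "\<lambda>k i. coeff g i * coeff h (k - i)"
  let ?D = "\<lambda>k. Mg + Mh + w * int k"
  have le: "lep (?D k) (?t k i)" if "i \<le> k" for k i
  proof (cases "coeff g i = 0 \<or> coeff h (k - i) = 0")
    case True then show ?thesis by (auto simp: lep_def)
  next
    case False
    then have "wv w g i \<le> Mg" "wv w h (k - i) \<le> Mh" using G H by (auto simp: is_lo_def)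
    then show ?thesis using term_deg[of g i h "k - i" w] False that by (auto simp: lep_def)
  qed
  have lt: "ltp (?D k) (?t k i)" if "i \<le> k" "P > i \<or> Q > k - i" for k i
  proof (cases "coeff g i = 0 \<or> coeff h (k - i) = 0")
    case True then show ?thesis by (auto simp: ltp_def)
  next
    case False
    then have "wv w g i \<le> Mg" "wv w h (k - i) \<le> Mh" using G H by (auto simp: is_lo_def)
    moreover have "wv w g i < Mg \<or> wv w h (k - i) < Mh" using G H that False by (auto simp: is_lo_def)
    ultimately show ?thesis using term_deg[of g i h "k - i" w] False that by (auto simp: ltp_def)
  qed
  have all: "coeff (g * h) k \<noteq> 0 \<longrightarrow> wv w (g * h) k \<le> Mg + Mh" for k
  proof -
    have "lep (?D k) (coeff (g * h) k)" unfolding coeff_mult by (rule lep_sum) (use le in auto)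
    then show ?thesis by (auto simp: lep_def wv_def)
  qed
  have below: "coeff (g * h) k \<noteq> 0 \<longrightarrow> wv w (g * h) k < Mg + Mh" if "k < P + Q" for k
  proof -
    have "ltp (?D k) (coeff (g * h) k)" unfolding coeff_mult
    proof (rule ltp_sum)
      fix i assume "i \<in> {..k}"
      then show "ltp (?D k) (?t k i)" by (intro lt) (use that in auto)
    qed simp
    then show ?thesis by (auto simp: ltp_def wv_def)
  qed
  let ?k = "P + Q"
  have split: "coeff (g * h) ?k = ?t ?k P + (\<Sum>i\<in>{..?k} - {P}. ?t ?k i)"
    unfolding coeff_mult by (subst sum.remove[of _ P]) auto
  have tP: "?t ?k P \<noteq> 0" "int (degree (?t ?k P)) = ?D ?k"
    using G H term_deg[of g P h Q w] by (auto simp: is_lo_def)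
  have rest: "ltp (int (degree (?t ?k P))) (\<Sum>i\<in>{..?k} - {P}. ?t ?k i)"
    unfolding tP(2)
  proof (rule ltp_sum)
    fix i assume "i \<in> {..?k} - {P}"
    then show "ltp (?D ?k) (?t ?k i)" by (intro lt) auto
  qed simp
  from exact_add[OF tP(1) rest] split tP(2)
  have "coeff (g * h) ?k \<noteq> 0" "wv w (g * h) ?k = Mg + Mh" by (auto simp: wv_def)
  then show ?thesis using all below by (auto simp: is_lo_def)
qed

lemma exists_hi:
  fixes g :: "'a::field poly poly"
  assumes "g \<noteq> 0" shows "\<exists>P M. is_hi w g P M"
proof -
  define S where "S = {k. coeff g k \<noteq> 0}"
  have fin: "finite S" unfolding S_def by (rule finite_subset[of _ "{..degree g}"]) (auto intro: le_degree)
  have ne: "S \<noteq> {}" using assms unfolding S_def by (metis (mono_tags) empty_Collect_eq leading_coeff_0_iff)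
  define M where "M = Max (wv w g ` S)"
  define T where "T = {k\<in>S. wv w g k = M}"
  have finT: "finite T" using fin unfolding T_def by simp
  have "M \<in> wv w g ` S" unfolding M_def using fin ne by (intro Max_in) auto
  then have neT: "T \<noteq> {}" unfolding T_def by auto
  define P where "P = Max T"
  have PT: "P \<in> T" using finT neT unfolding P_def by simp
  have "is_hi w g P M"
    unfolding is_hi_def
  proof (intro conjI allI impI)
    show "coeff g P \<noteq> 0" "wv w g P = M" using PT unfolding T_def S_def by auto
  next
    fix k assume "coeff g k \<noteq> 0"
    then show "wv w g k \<le> M" unfolding M_def using fin by (auto simp: S_def)
  next
    fix k assume k: "P < k" "coeff g k \<noteq> 0"
    then have le: "wv w g k \<le> M" unfolding M_def using fin by (auto simp: S_def)
    have "k \<notin> T" using k finT unfolding P_def using Max_ge leD by blast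
    then show "wv w g k < M" using le k unfolding T_def S_def by auto
  qed
  then show ?thesis by blast
qed

lemma exists_lo:
  fixes g :: "'a::field poly poly"
  assumes "g \<noteq> 0" shows "\<exists>P M. is_lo w g P M"
proof -
  define S where "S = {k. coeff g k \<noteq> 0}"
  have fin: "finite S" unfolding S_def by (rule finite_subset[of _ "{..degree g}"]) (auto intro: le_degree)
  have ne: "S \<noteq> {}" using assms unfolding S_def by (metis (mono_tags) empty_Collect_eq leading_coeff_0_iff)
  define M where "M = Max (wv w g ` S)"
  define T where "T = {k\<in>S. wv w g k = M}"
  have finT: "finite T" using fin unfolding T_def by simp
  have "M \<in> wv w g ` S" unfolding M_def using fin ne by (intro Max_in) auto
  then have neT: "T \<noteq> {}" unfolding T_def by auto
  define P where "P = Min T"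
  have PT: "P \<in> T" using finT neT unfolding P_def by simp
  have "is_lo w g P M"
    unfolding is_lo_def
  proof (intro conjI allI impI)
    show "coeff g P \<noteq> 0" "wv w g P = M" using PT unfolding T_def S_def by auto
  next
    fix k assume "coeff g k \<noteq> 0"
    then show "wv w g k \<le> M" unfolding M_def using fin by (auto simp: S_def)
  next
    fix k assume k: "k < P" "coeff g k \<noteq> 0"
    then have le: "wv w g k \<le> M" unfolding M_def using fin by (auto simp: S_def)
    have "k \<notin> T" using k finT unfolding P_def using Min_le leD by blast
    then show "wv w g k < M" using le k unfolding T_def S_def by auto
  qed
  then show ?thesis by blast
qed

lemma uniq_hi: "is_hi w g P M \<Longrightarrow> is_hi w g P' M' \<Longrightarrow> P = P'"
  unfolding is_hi_def by (metis antisym less_le_not_le nat_neq_iff)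

lemma uniq_lo: "is_lo w g P M \<Longrightarrow> is_lo w g P' M' \<Longrightarrow> P = P'"
  unfolding is_lo_def by (metis antisym less_le_not_le nat_neq_iff)

lemma hi_list:
  fixes fs :: "'a::field poly poly list"
  shows "is_hi w (prod_list fs) j M \<Longrightarrow> (\<forall>g\<in>set fs. g \<noteq> 0 \<and> (\<forall>P M. is_hi w g P M \<longrightarrow> 1 \<le> P))
    \<Longrightarrow> length fs \<le> j"
proof (induction fs arbitrary: j M)
  case Nil then show ?case by simp
next
  case (Cons g gs)
  have nz: "prod_list gs \<noteq> 0" using Cons.prems(2) by (auto simp: prod_list_zero_iff)
  obtain P Mg where P: "is_hi w g P Mg" using exists_hi Cons.prems(2) by force
  obtain Q Mh where Q: "is_hi w (prod_list gs) Q Mh" using exists_hi nz by blast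
  have "is_hi w (prod_list (g # gs)) (P + Q) (Mg + Mh)" using mult_hi[OF P Q] by simp
  then have j: "j = P + Q" using uniq_hi Cons.prems(1) by blast
  have "length gs \<le> Q" using Cons.IH[OF Q] Cons.prems(2) by simp
  moreover have "1 \<le> P" using P Cons.prems(2) by auto
  ultimately show ?case using j by simp
qed

lemma lo_list:
  fixes fs :: "'a::field poly poly list"
  shows "is_lo w (prod_list fs) j M \<Longrightarrow> (\<forall>g\<in>set fs. g \<noteq> 0 \<and> (\<forall>P M. is_lo w g P M \<longrightarrow> P + 1 \<le> degree g))
    \<Longrightarrow> j + length fs \<le> degree (prod_list fs)"
proof (induction fs arbitrary: j M)
  case Nil then show ?case by (auto simp: is_lo_def coeff_1 split: if_splits)
next
  case (Cons g gs)
  have nz: "prod_list gs \<noteq> 0" using Cons.prems(2) by (auto simp: prod_list_zero_iff)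
  have gnz: "g \<noteq> 0" using Cons.prems(2) by auto
  obtain P Mg where P: "is_lo w g P Mg" using exists_lo gnz by blast
  obtain Q Mh where Q: "is_lo w (prod_list gs) Q Mh" using exists_lo nz by blast
  have "is_lo w (prod_list (g # gs)) (P + Q) (Mg + Mh)" using mult_lo[OF P Q] by simp
  then have j: "j = P + Q" using uniq_lo Cons.prems(1) by blast
  have "Q + length gs \<le> degree (prod_list gs)" using Cons.IH[OF Q] Cons.prems(2) by simp
  moreover have "P + 1 \<le> degree g" using P Cons.prems(2) by auto
  moreover have "degree (prod_list (g # gs)) = degree g + degree (prod_list gs)"
    using nz gnz by (simp add: degree_mult_eq)
  ultimately show ?case using j by simp
qed

lemma unique_max_hi_lo:
  fixes f :: "'a::field poly poly"
  assumes "coeff f j \<noteq> 0" "\<And>k. k \<noteq> j \<Longrightarrow> coeff f k \<noteq> 0 \<Longrightarrow> wv w f k < wv w f j"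
  shows "is_hi w f j (wv w f j) \<and> is_lo w f j (wv w f j)"
  using assms unfolding is_hi_def is_lo_def by (metis less_imp_le nat_neq_iff order_refl)

theorem theorem8:
  fixes f :: "'a::field poly poly" and n j :: nat
  assumes n_def: "n = degree f"
    and n2: "n \<ge> 2"
    and a0: "coeff f 0 \<noteq> 0"
    and an: "coeff f n \<noteq> 0"
    and no_const_factor: "\<And>g :: 'a poly. [:g:] dvd f \<Longrightarrow> degree g = 0"
    and j1: "1 \<le> j" and j2: "j \<le> n - 1"
    and left: "\<And>i. i < j \<Longrightarrow> coeff f i \<noteq> 0 \<Longrightarrow>
                 degree (coeff f j) > degree (coeff f i) + (j - i) * degree (coeff f n)"
    and right: "\<And>i. j < i \<Longrightarrow> i \<le> n \<Longrightarrow> coeff f i \<noteq> 0 \<Longrightarrow>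
                 degree (coeff f j) > degree (coeff f i) + (i - j) * degree (coeff f 0)"
  shows "(\<exists>fs :: 'a poly poly list. f = prod_list fs \<and> (\<forall>g\<in>set fs. irreducible g)
            \<and> length fs \<le> min j (n - j))
         \<and> ((j = 1 \<or> j = n - 1) \<longrightarrow> irreducible f)"
proof -
  define A where "A = int (degree (coeff f 0))"
  define B where "B = int (degree (coeff f n))"
  have A0: "A \<ge> 0" "B \<ge> 0" by (auto simp: A_def B_def)
  have fnz: "f \<noteq> 0" using a0 by auto
  have nunit: "\<not> is_unit f" using n2 n_def by (auto simp: is_unit_poly_iff)
  obtain fs where fs: "f = prod_list fs" "\<forall>g\<in>set fs. irreducible g"
    using factor_list[OF fnz nunit] by blast
  have dvdf: "g dvd f" if "g \<in> set fs" for g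
    using that fs(1) by (simp add: prod_list_dvd)
  have gprops: "g \<noteq> 0 \<and> degree g \<ge> 1 \<and> coeff g 0 \<noteq> 0 \<and> int (degree (coeff g 0)) \<le> A
       \<and> int (degree (lead_coeff g)) \<le> B" if g: "g \<in> set fs" for g
  proof -
    have irr: "irreducible g" using fs(2) g by auto
    obtain k where k: "f = g * k" using dvdf[OF g] by blast
    have gnz: "g \<noteq> 0" "k \<noteq> 0" using k fnz by auto
    have c0: "coeff f 0 = coeff g 0 * coeff k 0" using k by (simp add: coeff_mult_0)
    have lc: "lead_coeff f = lead_coeff g * lead_coeff k" using k by (simp add: lead_coeff_mult)
    have dg: "degree g \<ge> 1"
    proof (rule ccontr)
      assume "\<not> degree g \<ge> 1"
      then have "degree g = 0" by simp
      then obtain c where c: "g = [:c:]" by (rule degree_eq_zeroE)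
      then have "degree c = 0" using no_const_factor dvdf[OF g] by blast
      moreover have "c \<noteq> 0" using c gnz by auto
      ultimately have "is_unit g" using c by (auto simp: is_unit_poly_iff dvd_field_iff elim!: degree_eq_zeroE)
      then show False using irr by (simp add: irreducible_def)
    qed
    have "coeff g 0 dvd coeff f 0" using c0 by simp
    then have d0: "degree (coeff g 0) \<le> degree (coeff f 0)" using a0 by (rule dvd_imp_degree_le)
    have "lead_coeff g dvd lead_coeff f" using lc by simp
    then have dn: "degree (lead_coeff g) \<le> degree (coeff f n)" using an n_def by (intro dvd_imp_degree_le) auto
    show ?thesis using gnz dg d0 dn c0 a0 unfolding A_def B_def by auto
  qed
  have "degree (coeff f j) > 0" using left[of 0] j1 a0 by simp
  then have ajnz: "coeff f j \<noteq> 0" by auto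
  have fhi: "is_hi (-A) f j (wv (-A) f j)"
  proof -
    have "wv (-A) f k < wv (-A) f j" if k: "k \<noteq> j" "coeff f k \<noteq> 0" for k
    proof (cases "k < j")
      case True
      have "degree (coeff f j) > degree (coeff f k)" using left[OF True k(2)] by simp
      moreover have "A * int k \<le> A * int j" using True A0 by (intro mult_left_mono) auto
      ultimately show ?thesis by (simp add: wv_def)
    next
      case False
      then have kj: "j < k" using k by simp
      have "k \<le> n" using k(2) n_def le_degree by blast
      then have "int (degree (coeff f j)) > int (degree (coeff f k)) + int (k - j) * A"
        using right[OF kj _ k(2)] unfolding A_def by (simp only: of_nat_add[symmetric] of_nat_less_iff of_nat_mult[symmetric])
      moreover have "int (k - j) = int k - int j" using kj by simp
      ultimately show ?thesis by (simp add: wv_def algebra_simps)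
    qed
    then show ?thesis using unique_max_hi_lo[of f j "-A"] ajnz by blast
  qed
  have flo: "is_lo B f j (wv B f j)"
  proof -
    have "wv B f k < wv B f j" if k: "k \<noteq> j" "coeff f k \<noteq> 0" for k
    proof (cases "k < j")
      case True
      have "int (degree (coeff f j)) > int (degree (coeff f k)) + int (j - k) * B"
        using left[OF True k(2)] unfolding B_def by (simp only: of_nat_add[symmetric] of_nat_less_iff of_nat_mult[symmetric])
      moreover have "int (j - k) = int j - int k" using True by simp
      ultimately show ?thesis by (simp add: wv_def algebra_simps)
    next
      case False
      then have kj: "j < k" using k by simp
      have "k \<le> n" using k(2) n_def le_degree by blast
      then have "degree (coeff f j) > degree (coeff f k)" using right[OF kj _ k(2)] by simp
      moreover have "B * int j \<le> B * int k" using kj A0 by (intro mult_left_mono) auto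
      ultimately show ?thesis by (simp add: wv_def)
    qed
    then show ?thesis using unique_max_hi_lo[of f j B] ajnz by blast
  qed
  have L1: "length fs \<le> j"
  proof (rule hi_list)
    show "is_hi (-A) (prod_list fs) j (wv (-A) f j)" using fhi fs(1) by simp
    show "\<forall>g\<in>set fs. g \<noteq> 0 \<and> (\<forall>P M. is_hi (-A) g P M \<longrightarrow> 1 \<le> P)"
    proof (intro ballI conjI allI impI)
      fix g assume g: "g \<in> set fs"
      show "g \<noteq> 0" using gprops[OF g] by simp
    next
      fix g P M assume g: "g \<in> set fs" and h: "is_hi (-A) g P M"
      note gp = gprops[OF g]
      show "1 \<le> P"
      proof (rule ccontr)
        assume "\<not> 1 \<le> P"
        then have P0: "P = 0" by simp
        have "coeff g (degree g) \<noteq> 0" using gp by simp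
        then have "wv (-A) g (degree g) < M" using h P0 gp unfolding is_hi_def by auto
        moreover have "M = int (degree (coeff g 0))" using h P0 unfolding is_hi_def wv_def by auto
        moreover have "A * int (degree g) \<ge> A" using mult_left_mono[of 1 "int (degree g)" A] gp A0 by simp
        ultimately show False using gp unfolding wv_def by simp
      qed
    qed
  qed
  have L2: "j + length fs \<le> n"
  proof -
    have "j + length fs \<le> degree (prod_list fs)"
    proof (rule lo_list)
      show "is_lo B (prod_list fs) j (wv B f j)" using flo fs(1) by simp
      show "\<forall>g\<in>set fs. g \<noteq> 0 \<and> (\<forall>P M. is_lo B g P M \<longrightarrow> P + 1 \<le> degree g)"
      proof (intro ballI conjI allI impI)
        fix g assume g: "g \<in> set fs"
        show "g \<noteq> 0" using gprops[OF g] by simp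
      next
        fix g P M assume g: "g \<in> set fs" and h: "is_lo B g P M"
        note gp = gprops[OF g]
        show "P + 1 \<le> degree g"
        proof (rule ccontr)
          assume "\<not> P + 1 \<le> degree g"
          moreover have "P \<le> degree g" using h le_degree unfolding is_lo_def by blast
          ultimately have Pr: "P = degree g" by simp
          have "wv B g 0 < M" using h Pr gp unfolding is_lo_def by auto
          moreover have "M = int (degree (lead_coeff g)) - B * int (degree g)"
            using h Pr unfolding is_lo_def wv_def by auto
          moreover have "B * int (degree g) \<ge> B" using mult_left_mono[of 1 "int (degree g)" B] gp A0 by simp
          ultimately show False using gp unfolding wv_def by simp
        qed
      qed
    qed
    then show ?thesis using fs(1) n_def by simp
  qed
  have part1: "\<exists>fs :: 'a poly poly list. f = prod_list fs \<and> (\<forall>g\<in>set fs. irreducible g)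
            \<and> length fs \<le> min j (n - j)"
    using fs L1 L2 by (intro exI[of _ fs]) auto
  have part2: "irreducible f" if "j = 1 \<or> j = n - 1"
  proof -
    have "length fs \<le> 1" using L1 L2 that by auto
    moreover have "fs \<noteq> []" using fs(1) nunit by auto
    ultimately obtain g where "fs = [g]" by (cases fs) auto
    then show ?thesis using fs by simp
  qed
  show ?thesis using part1 part2 by blast
qed

end
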